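(* Let $\varphi$ be a Boolean formula in 3-CNF and let $G$ be the graph constructed from $\varphi$ as described in the context. Let $X\subseteq V(G)$ be a minimum cluster deletion set of $G$. Then, for every clause gadget of $G$ (i.e., every $i\in\{1,\dots,m\}$), $X$ contains all vertices of two of the three sides $S_{1,i},S_{2,i},S_{3,i}$ and none of the vertices of the third side.
   Context: Let $\varphi$ consist of clauses $C_1,\dots,C_m$ over variables $x_1,\dots,x_n$, each clause containing exactly three literals, $C_i=(L_i^1\vee L_i^2\vee L_i^3)$. The graph $G$ has vertex set $\{u_{r,s,i}: r\in\{1,2,3\}, s\in\{1,\dots,7\}, i\in\{1,\dots,m\}\}\cup\{v_{r,s,j}: r\in\{1,2\}, s\in\{1,2,3\}, j\in\{1,\dots,n\}\}$ and edge set consisting of: $\{u_{r,s,i},u_{r',s',i}\}$ for all $r\ne r'$ in $\{1,2,3\}$, all $s,s'\in\{1,\dots,7\}$, all $i$; $\{v_{1,s,j},v_{2,s',j}\}$ for all $s,s'\in\{1,2,3\}$, all $j$; $\{u_{r,s,i},v_{1,s',j}\}$ for all $s\in\{1,\dots,7\}$, $s'\in\{1,2,3\}$ whenever $L_i^r = x_j$; and $\{u_{r,s,i},v_{2,s',j}\}$ for all $s\in\{1,\dots,7\}$, $s'\in\{1,2,3\}$ whenever $L_i^r=\neg x_j$. The clause gadget of $C_i$ is the complete tripartite graph on $\{u_{r,s,i}\}$ with sides $S_{r,i}=\{u_{r,s,i}: s\in\{1,\dots,7\}\}$, $r=1,2,3$; the variable gadget of $x_j$ is the complete bipartite graph on $\{v_{r,s,j}\}$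 with sides $T_{r,j}=\{v_{r,s,j}: s\in\{1,2,3\}\}$, $r=1,2$. A cluster deletion set of $G$ is a set $X\subseteq V(G)$ such that $G-X$ contains no induced path on three vertices; it is minimum if it has the smallest possible size. *)

theory Defs
  imports Main
begin

datatype lit = Pos nat | Neg nat

fun lit_var :: "lit \<Rightarrow> nat" where
  "lit_var (Pos j) = j" | "lit_var (Neg j) = j"

(* A 3-CNF formula with clauses C_1..C_m is given by L :: nat => nat => lit,
   where L i r is the literal L_i^r (i in {1..m}, r in {1,2,3}). *)

(* Vertices: U r s i = u_{r,s,i},  V r s j = v_{r,s,j} *)
datatype vtx = U nat nat nat | V nat nat nat

definition cd_vertices :: "nat \<Rightarrow> nat \<Rightarrow> vtx set" where
  "cd_vertices m n =
     {U r s i | r s i. r \<in> {1..3} \<and> s \<in> {1..7} \<and> i \<in> {1..m}}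
   \<union> {V r s j | r s j. r \<in> {1..2} \<and> s \<in> {1..3} \<and> j \<in> {1..n}}"

definition cd_edges :: "nat \<Rightarrow> nat \<Rightarrow> (nat \<Rightarrow> nat \<Rightarrow> lit) \<Rightarrow> vtx set set" where
  "cd_edges m n L =
     {{U r s i, U r' s' i} | r s r' s' i. r \<in> {1..3} \<and> r' \<in> {1..3} \<and> r \<noteq> r'
         \<and> s \<in> {1..7} \<and> s' \<in> {1..7} \<and> i \<in> {1..m}}
   \<union> {{V 1 s j, V 2 s' j} | s s' j. s \<in> {1..3} \<and> s' \<in> {1..3} \<and> j \<in> {1..n}}
   \<union> {{U r s i, V 1 s' j} | r s i s' j. r \<in> {1..3} \<and> s \<in> {1..7} \<and> i \<in> {1..m}
         \<and> s' \<in> {1..3} \<and> j \<in> {1..n} \<and> L i r = Pos j}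
   \<union> {{U r s i, V 2 s' j} | r s i s' j. r \<in> {1..3} \<and> s \<in> {1..7} \<and> i \<in> {1..m}
         \<and> s' \<in> {1..3} \<and> j \<in> {1..n} \<and> L i r = Neg j}"

definition has_induced_P3 :: "'a set \<Rightarrow> 'a set set \<Rightarrow> bool" where
  "has_induced_P3 W E \<longleftrightarrow>
     (\<exists>a\<in>W. \<exists>b\<in>W. \<exists>c\<in>W. a \<noteq> b \<and> b \<noteq> c \<and> a \<noteq> c
        \<and> {a, b} \<in> E \<and> {b, c} \<in> E \<and> {a, c} \<notin> E)"

definition cluster_deletion_set :: "'a set \<Rightarrow> 'a set set \<Rightarrow> 'a set \<Rightarrow> bool" where
  "cluster_deletion_set W E X \<longleftrightarrow> X \<subseteq> W \<and> \<not> has_induced_P3 (W - X) E"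

definition min_cluster_deletion_set :: "'a set \<Rightarrow> 'a set set \<Rightarrow> 'a set \<Rightarrow> bool" where
  "min_cluster_deletion_set W E X \<longleftrightarrow> cluster_deletion_set W E X
     \<and> (\<forall>Y. cluster_deletion_set W E Y \<longrightarrow> card X \<le> card Y)"

definition side :: "nat \<Rightarrow> nat \<Rightarrow> vtx set" where
  "side r i = {U r s i | s. s \<in> {1..7}}"

end

theory Submission imports Defs begin

fun tset :: "lit \<Rightarrow> vtx set" where
  "tset (Pos j) = {V 1 s j | s. s \<in> {1..3}}"
| "tset (Neg j) = {V 2 s j | s. s \<in> {1..3}}"

lemma edges_split: "e \<in> cd_edges m n L \<longleftrightarrow>
   (\<exists>r s r' s' i. e = {U r s i, U r' s' i} \<and> r \<in> {1..3} \<and> r' \<in> {1..3} \<and> r \<noteq> r'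
         \<and> s \<in> {1..7} \<and> s' \<in> {1..7} \<and> i \<in> {1..m})
 \<or> (\<exists>s s' j. e = {V 1 s j, V 2 s' j} \<and> s \<in> {1..3} \<and> s' \<in> {1..3} \<and> j \<in> {1..n})
 \<or> (\<exists>r s i s' j. e = {U r s i, V 1 s' j} \<and> r \<in> {1..3} \<and> s \<in> {1..7} \<and> i \<in> {1..m}
         \<and> s' \<in> {1..3} \<and> j \<in> {1..n} \<and> L i r = Pos j)
 \<or> (\<exists>r s i s' j. e = {U r s i, V 2 s' j} \<and> r \<in> {1..3} \<and> s \<in> {1..7} \<and> i \<in> {1..m}
         \<and> s' \<in> {1..3} \<and> j \<in> {1..n} \<and> L i r = Neg j)"
  unfolding cd_edges_def by blast

lemma edge_UU:
  assumes "q \<in> {1..3}" "q' \<in> {1..3}" "q \<noteq> q'" "s\<in>{1..7}" "s'\<in>{1..7}" "i\<in>{1..m}"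
  shows "{U q s i, U q' s' i} \<in> cd_edges m n L"
  unfolding edges_split using assms by blast

lemma edge_UT:
  assumes "r\<in>{1..3}" "s\<in>{1..7}" "i\<in>{1..m}" "lit_var (L i r) \<in> {1..n}" "v \<in> tset (L i r)"
  shows "{U r s i, v} \<in> cd_edges m n L"
proof (cases "L i r")
  case (Pos j)
  then obtain s' where "v = V 1 s' j" "s' \<in> {1..3}" using assms(5) by auto
  then show ?thesis unfolding edges_split using assms Pos by (metis lit_var.simps(1))
next
  case (Neg j)
  then obtain s' where "v = V 2 s' j" "s' \<in> {1..3}" using assms(5) by auto
  then show ?thesis unfolding edges_split using assms Neg by (metis lit_var.simps(2))
qed

lemma nonedge_UU: "{U q s i, U q s' i} \<notin> cd_edges m n L"
  unfolding edges_split by (auto simp: doubleton_eq_iff)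

lemma nonedge_TT: "v \<in> tset l \<Longrightarrow> w \<in> tset l \<Longrightarrow> {v,w} \<notin> cd_edges m n L"
  by (cases l) (auto simp: edges_split doubleton_eq_iff)

lemma nbr:
  assumes "{U r s i, y} \<in> cd_edges m n L"
  shows "(\<exists>r' s'. r' \<in> {1..3} \<and> r' \<noteq> r \<and> s' \<in> {1..7} \<and> y = U r' s' i) \<or> y \<in> tset (L i r)"
  using assms unfolding edges_split
  apply (elim disjE exE conjE)
  apply (auto simp: doubleton_eq_iff)
  done

lemma finW: "finite (cd_vertices m n)"
proof -
  let ?f = "\<lambda>p. U (fst p) (fst (snd p)) (snd (snd p))"
  let ?g = "\<lambda>p. V (fst p) (fst (snd p)) (snd (snd p))"
  have "cd_vertices m n \<subseteq> ?f ` ({1..3}\<times>{1..7}\<times>{1..m}) \<union> ?g ` ({1..2}\<times>{1..3}\<times>{1..n})"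
  proof
    fix x assume "x \<in> cd_vertices m n"
    then consider (a) r s i where "x = U r s i" "r \<in> {1..3}" "s \<in> {1..7}" "i \<in> {1..m}"
      | (b) r s j where "x = V r s j" "r \<in> {1..2}" "s \<in> {1..3}" "j \<in> {1..n}"
      unfolding cd_vertices_def by blast
    then show "x \<in> ?f ` ({1..3}\<times>{1..7}\<times>{1..m}) \<union> ?g ` ({1..2}\<times>{1..3}\<times>{1..n})"
    proof cases
      case a
      then have "x = ?f (r,s,i)" "(r,s,i) \<in> {1..3}\<times>{1..7}\<times>{1..m}" by auto
      then show ?thesis by blast
    next
      case b
      then have "x = ?g (r,s,j)" "(r,s,j) \<in> {1..2}\<times>{1..3}\<times>{1..n}" by auto
      then show ?thesis by blast
    qed
  qed
  then show ?thesis by (rule finite_subset) auto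
qed

lemma card_side: "card (side r i) = 7"
proof -
  have "side r i = (\<lambda>s. U r s i) ` {1..7}" unfolding side_def by auto
  moreover have "inj_on (\<lambda>s. U r s i) {1..7}" by (auto simp: inj_on_def)
  ultimately show ?thesis by (simp add: card_image)
qed

lemma card_tset: "card (tset l) = 3"
proof (cases l)
  case (Pos j)
  have "tset l = (\<lambda>s. V 1 s j) ` {1..3}" using Pos by auto
  moreover have "inj_on (\<lambda>s. V 1 s j) {1..3}" by (auto simp: inj_on_def)
  ultimately show ?thesis by (simp add: card_image)
next
  case (Neg j)
  have "tset l = (\<lambda>s. V 2 s j) ` {1..3}" using Neg by auto
  moreover have "inj_on (\<lambda>s. V 2 s j) {1..3}" by (auto simp: inj_on_def)
  ultimately show ?thesis by (simp add: card_image)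
qed

lemma side_W: "r \<in> {1..3} \<Longrightarrow> i \<in> {1..m} \<Longrightarrow> side r i \<subseteq> cd_vertices m n"
  unfolding side_def cd_vertices_def by auto

lemma tset_W: "lit_var l \<in> {1..n} \<Longrightarrow> tset l \<subseteq> cd_vertices m n"
  by (cases l) (auto simp: cd_vertices_def)

lemma two_elems: "card A \<ge> 2 \<Longrightarrow> \<exists>x y. x \<in> A \<and> y \<in> A \<and> x \<noteq> y"
proof -
  assume c: "card A \<ge> 2"
  then have fin: "finite A" by (metis card.infinite not_numeral_le_zero)
  from c have "A \<noteq> {}" by auto
  then obtain x where x: "x \<in> A" by blast
  have "card (A - {x}) = card A - 1" using x fin by simp
  then have "card (A - {x}) \<noteq> 0" using c by linarith
  then have "A - {x} \<noteq> {}" by (metis card.empty)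
  then obtain y where "y \<in> A - {x}" by blast
  then show ?thesis using x by blast
qed

lemma improve:
  fixes m n :: nat and L :: "nat \<Rightarrow> nat \<Rightarrow> lit" and X :: "vtx set"
  defines "W \<equiv> cd_vertices m n" and "E \<equiv> cd_edges m n L"
  assumes rng: "\<forall>i\<in>{1..m}. \<forall>r\<in>{1..3}. lit_var (L i r) \<in> {1..n}"
    and cds: "cluster_deletion_set W E X"
    and i: "i \<in> {1..m}"
    and bad: "\<not> (\<exists>r\<in>{1..3}. side r i \<inter> X = {} \<and> (\<forall>r'\<in>{1..3}. r' \<noteq> r \<longrightarrow> side r' i \<subseteq> X))"
  shows "\<exists>Y. cluster_deletion_set W E Y \<and> card Y < card X"
proof -
  define a where "a q = card (side q i - X)" for q
  define t where "t q = card (tset (L i q) - X)" for q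
  have XW: "X \<subseteq> W" and noP: "\<not> has_induced_P3 (W - X) E" using cds unfolding cluster_deletion_set_def by auto
  have finX: "finite X" using XW finW W_def finite_subset by blast
  have finS: "finite (side q i)" for q using card_side[of q i] by (metis card_ge_0_finite zero_less_numeral)
  have finT: "finite (tset l)" for l using card_tset[of l] by (metis card_ge_0_finite zero_less_numeral)
  have P3: False if "x \<in> W - X" "y \<in> W - X" "z \<in> W - X" "x \<noteq> y" "y \<noteq> z" "x \<noteq> z"
      "{x,y} \<in> E" "{y,z} \<in> E" "{x,z} \<notin> E" for x y z
    using noP that unfolding has_induced_P3_def by blast
  have a7: "a q \<le> 7" for q unfolding a_def using card_side[of q i] finS
    by (metis Diff_subset card_mono)
  have t3: "t q \<le> 3" for q unfolding t_def using card_tset[of "L i q"] finT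
    by (metis Diff_subset card_mono)
  have C1: False if h: "q \<in> {1..3}" "q' \<in> {1..3}" "q \<noteq> q'" "a q \<ge> 2" "a q' \<ge> 1" for q q'
  proof -
    obtain u1 u2 where u: "u1 \<in> side q i - X" "u2 \<in> side q i - X" "u1 \<noteq> u2"
      using two_elems[of "side q i - X"] h(4) a_def by auto
    obtain v where v: "v \<in> side q' i - X" using h(5) a_def
      by (metis card.empty ex_in_conv not_one_le_zero)
    obtain s1 s2 s3 where s: "u1 = U q s1 i" "u2 = U q s2 i" "v = U q' s3 i" "s1 \<in> {1..7}" "s2 \<in> {1..7}" "s3 \<in> {1..7}"
      using u v unfolding side_def by blast
    have Wq: "side q i \<subseteq> W" "side q' i \<subseteq> W" using side_W[OF h(1) i] side_W[OF h(2) i] W_def by auto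
    have e1: "{u1,v} \<in> E" unfolding E_def s(1,3) using edge_UU h(1-3) s(4,6) i by blast
    have e2: "{v,u2} \<in> E" unfolding E_def s(2,3) using edge_UU h(1-3) s(5,6) i by metis
    have e3: "{u1,u2} \<notin> E" unfolding E_def s(1,2) by (rule nonedge_UU)
    have d: "u1 \<noteq> v" "v \<noteq> u2" using s h(3) by auto
    show False
      by (rule P3[of u1 v u2]) (use u v Wq d e1 e2 e3 in auto)
  qed
  have C2: False if h: "r \<in> {1..3}" "a r \<ge> 2" "t r \<ge> 1" for r
  proof -
    obtain u1 u2 where u: "u1 \<in> side r i - X" "u2 \<in> side r i - X" "u1 \<noteq> u2"
      using two_elems[of "side r i - X"] h(2) a_def by auto
    obtain w where w: "w \<in> tset (L i r) - X" using h(3) t_def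
      by (metis card.empty ex_in_conv not_one_le_zero)
    obtain s1 s2 where s: "u1 = U r s1 i" "u2 = U r s2 i" "s1 \<in> {1..7}" "s2 \<in> {1..7}"
      using u unfolding side_def by blast
    have lv: "lit_var (L i r) \<in> {1..n}" using rng i h(1) by blast
    have wU: "w \<noteq> U x y z" for x y z using w by (cases "L i r") auto
    have Wr: "side r i \<subseteq> W" "tset (L i r) \<subseteq> W" using side_W[OF h(1) i] tset_W[OF lv] W_def by auto
    have e1: "{u1,w} \<in> E" unfolding E_def s(1) using edge_UT h(1) s(3) i lv w by blast
    have e2: "{w,u2} \<in> E" unfolding E_def s(2) using edge_UT[where L=L and i=i and r=r and m=m and n=n, OF h(1) s(4) i lv] w by (simp add: insert_commute)
    have e3: "{u1,u2} \<notin> E" unfolding E_def s(1,2) by (rule nonedge_UU)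
    have d: "u1 \<noteq> w" "w \<noteq> u2" using s wU by auto
    show False
      by (rule P3[of u1 w u2]) (use u w Wr d e1 e2 e3 in auto)
  qed
  have C3: False if h: "r \<in> {1..3}" "a r \<ge> 1" "t r \<ge> 2" for r
  proof -
    obtain w1 w2 where w: "w1 \<in> tset (L i r) - X" "w2 \<in> tset (L i r) - X" "w1 \<noteq> w2"
      using two_elems[of "tset (L i r) - X"] h(3) t_def by auto
    obtain u where u: "u \<in> side r i - X" using h(2) a_def
      by (metis card.empty ex_in_conv not_one_le_zero)
    obtain s1 where s: "u = U r s1 i" "s1 \<in> {1..7}"
      using u unfolding side_def by blast
    have lv: "lit_var (L i r) \<in> {1..n}" using rng i h(1) by blast
    have wU: "w \<in> tset (L i r) \<Longrightarrow> w \<noteq> U x y z" for w x y z by (cases "L i r") auto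
    have Wr: "side r i \<subseteq> W" "tset (L i r) \<subseteq> W" using side_W[OF h(1) i] tset_W[OF lv] W_def by auto
    have e1: "{w1,u} \<in> E" unfolding E_def s(1) using edge_UT[where L=L and i=i and r=r and m=m and n=n, OF h(1) s(2) i lv] w by (simp add: insert_commute)
    have e2: "{u,w2} \<in> E" unfolding E_def s(1) using edge_UT h(1) s(2) i lv w by blast
    have e3: "{w1,w2} \<notin> E" unfolding E_def using nonedge_TT w by blast
    have d: "w1 \<noteq> u" "u \<noteq> w2" using s wU w by auto
    show False
      by (rule P3[of w1 u w2]) (use u w Wr d e1 e2 e3 in auto)
  qed
  have full: "side q i \<inter> X = {} \<longleftrightarrow> a q = 7" for q
  proof
    assume "side q i \<inter> X = {}"
    then have "side q i - X = side q i" by auto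
    then show "a q = 7" using a_def card_side by simp
  next
    assume "a q = 7"
    then have "side q i - X = side q i" using a_def card_side finS
      by (metis Diff_subset card_subset_eq)
    then show "side q i \<inter> X = {}" by auto
  qed
  have empt: "side q i \<subseteq> X \<longleftrightarrow> a q = 0" for q
    using finS[of q] unfolding a_def by auto
  have gen: "\<exists>Y. cluster_deletion_set W E Y \<and> card Y < card X"
    if r: "r \<in> {1..3}" "r' \<in> {1..3}" "r'' \<in> {1..3}" "r \<noteq> r'" "r \<noteq> r''" "r' \<noteq> r''"
      and mx: "a r' \<le> a r" "a r'' \<le> a r" for r r' r''
  proof -
    have oth: "q = r' \<or> q = r''" if "q \<in> {1..3}" "q \<noteq> r" for q using r that by auto
    have notgood: "\<not> (a r = 7 \<and> a r' = 0 \<and> a r'' = 0)"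
    proof
      assume h: "a r = 7 \<and> a r' = 0 \<and> a r'' = 0"
      have "side r i \<inter> X = {} \<and> (\<forall>q\<in>{1..3}. q \<noteq> r \<longrightarrow> side q i \<subseteq> X)"
        using h full empt oth by metis
      then show False using bad r(1) by blast
    qed
    have n1: "\<not> (2 \<le> a r \<and> 1 \<le> a r')" using C1[OF r(1) r(2) r(4)] by blast
    have n2: "\<not> (2 \<le> a r \<and> 1 \<le> a r'')" using C1[OF r(1) r(3) r(5)] by blast
    have n3: "\<not> (2 \<le> a r \<and> 1 \<le> t r)" using C2[OF r(1)] by blast
    have n4: "\<not> (1 \<le> a r \<and> 2 \<le> t r)" using C3[OF r(1)] by blast
    have ar7: "a r \<le> 7" and tr3: "t r \<le> 3" using a7 t3 by auto
    have cost: "a r' + a r'' + t r < 7 - a r"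
    proof (cases "a r \<ge> 2")
      case True
      then have "a r' = 0" "a r'' = 0" "t r = 0" using n1 n2 n3 by auto
      then have "a r \<noteq> 7" using notgood by auto
      then show ?thesis using ar7 \<open>a r' = 0\<close> \<open>a r'' = 0\<close> \<open>t r = 0\<close> by linarith
    next
      case False
      show ?thesis
      proof (cases "a r = 1")
        case True
        then have "t r \<le> 1" using n4 by auto
        then show ?thesis using True mx by linarith
      next
        case F2: False
        then have "a r = 0" using False by linarith
        then show ?thesis using mx tr3 by linarith
      qed
    qed
    define Y where "Y = (X - side r i) \<union> side r' i \<union> side r'' i \<union> tset (L i r)"
    have lv: "lit_var (L i r) \<in> {1..n}" using rng i r(1) by blast
    have YW: "Y \<subseteq> W" unfolding Y_def W_def
      using XW side_W[OF r(2) i] side_W[OF r(3) i] tset_W[OF lv] W_def by auto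
    have dsj: "side q i \<inter> side q' i = {}" if "q \<noteq> q'" for q q' using that unfolding side_def by auto
    have dsjT: "side q i \<inter> tset l = {}" for q l by (cases l) (auto simp: side_def)
    have Yeq: "Y = (X - side r i) \<union> (side r' i - X) \<union> (side r'' i - X) \<union> (tset (L i r) - X)"
      unfolding Y_def using dsj[of r r'] dsj[of r r''] dsjT[of r "L i r"] r by auto
    have "card Y \<le> card ((X - side r i) \<union> (side r' i - X) \<union> (side r'' i - X)) + t r"
      unfolding Yeq t_def by (rule card_Un_le)
    also have "\<dots> \<le> card ((X - side r i) \<union> (side r' i - X)) + a r'' + t r"
      unfolding a_def using card_Un_le by (metis add_le_mono1)
    also have "\<dots> \<le> card (X - side r i) + a r' + a r'' + t r"
      unfolding a_def using card_Un_le by (metis add_le_mono1)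
    finally have cY: "card Y \<le> card (X - side r i) + a r' + a r'' + t r" .
    have cX: "card X = card (X \<inter> side r i) + card (X - side r i)"
      using card_Int_Diff[OF finX] by blast
    have cS: "card (side r i) = card (side r i \<inter> X) + a r"
      unfolding a_def using card_Int_Diff[OF finS] by blast
    have "card (X \<inter> side r i) = 7 - a r" using cS card_side[of r i] by (simp add: Int_commute)
    then have "card Y < card X" using cY cX cost cS card_side[of r i] by linarith
    moreover have "cluster_deletion_set W E Y"
      unfolding cluster_deletion_set_def has_induced_P3_def
    proof (intro conjI YW notI)
      have iso: "y \<in> Y" if h: "x \<in> side r i" "{x,y} \<in> E" for x y
      proof -
        obtain s where "x = U r s i" using h(1) side_def by blast
        then have "(\<exists>q s'. q \<in> {1..3} \<and> q \<noteq> r \<and> s' \<in> {1..7} \<and> y = U q s' i) \<or> y \<in> tset (L i r)"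
          using nbr h(2) E_def by blast
        then show ?thesis unfolding Y_def side_def using oth by blast
      qed
      assume "\<exists>x\<in>W - Y. \<exists>y\<in>W - Y. \<exists>z\<in>W - Y. x \<noteq> y \<and> y \<noteq> z \<and> x \<noteq> z \<and> {x, y} \<in> E \<and> {y, z} \<in> E \<and> {x, z} \<notin> E"
      then obtain x y z where h: "x\<in>W - Y" "y\<in>W - Y" "z\<in>W - Y" "x \<noteq> y" "y \<noteq> z" "x \<noteq> z"
         "{x, y} \<in> E" "{y, z} \<in> E" "{x, z} \<notin> E" by blast
      have "x \<notin> side r i" using iso[of x y] h by blast
      moreover have "z \<notin> side r i"
      proof
        assume "z \<in> side r i"
        moreover have "{z,y} \<in> E" using h(8) by (simp add: insert_commute)
        ultimately have "y \<in> Y" by (rule iso)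
        then show False using h(2) by blast
      qed
      moreover have "y \<notin> side r i"
      proof
        assume "y \<in> side r i"
        moreover have "{y,x} \<in> E" using h(7) by (simp add: insert_commute)
        ultimately have "x \<in> Y" by (rule iso)
        then show False using h(1) by blast
      qed
      ultimately have "x \<in> W - X" "y \<in> W - X" "z \<in> W - X" using h unfolding Y_def by auto
      then show False using P3 h by blast
    qed
    ultimately show ?thesis by blast
  qed
  show ?thesis
  proof (cases "a 2 \<le> a 1 \<and> a 3 \<le> a 1")
    case True then show ?thesis using gen[of 1 2 3] by auto
  next
    case False
    show ?thesis
    proof (cases "a 3 \<le> a 2")
      case True then show ?thesis using gen[of 2 1 3] False by auto
    next
      case F2: False then show ?thesis using gen[of 3 1 2] False by auto
    qed
  qed
qed

theorem lemma10:
  fixes m n :: nat and L :: "nat \<Rightarrow> nat \<Rightarrow> lit" and X :: "vtx set"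
  assumes "\<forall>i\<in>{1..m}. \<forall>r\<in>{1..3}. lit_var (L i r) \<in> {1..n}"
    and "min_cluster_deletion_set (cd_vertices m n) (cd_edges m n L) X"
  shows "\<forall>i\<in>{1..m}. \<exists>r\<in>{1..3}. side r i \<inter> X = {}
           \<and> (\<forall>r'\<in>{1..3}. r' \<noteq> r \<longrightarrow> side r' i \<subseteq> X)"
proof (rule ccontr)
  assume "\<not> ?thesis"
  then obtain i where i: "i \<in> {1..m}" and bad: "\<not> (\<exists>r\<in>{1..3}. side r i \<inter> X = {}
           \<and> (\<forall>r'\<in>{1..3}. r' \<noteq> r \<longrightarrow> side r' i \<subseteq> X))" by blast
  have cds: "cluster_deletion_set (cd_vertices m n) (cd_edges m n L) X"
    using assms(2) unfolding min_cluster_deletion_set_def by blast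
  obtain Y where "cluster_deletion_set (cd_vertices m n) (cd_edges m n L) Y" "card Y < card X"
    using improve[OF assms(1) cds i bad] by blast
  then show False using assms(2) unfolding min_cluster_deletion_set_def by force
qed

end
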